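(* Assume the drift assumption and the perturbation assumption below, and let $f,c_0,\varphi_0$ be as constructed below. Given $\delta>0$, let $\lambda:\mathbb R^d\to\mathbb R$ be a smooth function with $|\lambda(z)|\le1$ for all $z$ and $\lambda(z)=1$ for $|z|\ge\delta$. If $L<\frac{c_0\varphi_0\sigma^2}{8}$, then with $c:=c_0\sigma^2/2$, for all $X,Y\in\mathbb R^{Nd}$, writing $Z=X-Y$ and $r^i=|Z^i|$, $$\sum_{i=1}^N\Big((r^i)^{-1}Z^i\cdot(b^i(X)-b^i(Y))f'(r^i)+2\sigma^2\lambda^2(Z^i)f''(r^i)\Big)\le N m(\delta)-c\sum_{i=1}^Nf(r^i),$$ where $m(\delta)=\frac{\sigma^2}{2}\sup_{0<r<\delta}\big(r\kappa(r)^-\big)+c_0\sigma^2\delta$ and $x^-=-\min\{x,0\}$.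
   Context: Let $N\ge1$, $d\ge1$, $\sigma>0$, $b:\mathbb R^d\to\mathbb R^d$, $\gamma^i:\mathbb R^{Nd}\to\mathbb R^d$ ($i=1,\dots,N$), and $b^i(x)=b(x^i)+\gamma^i(x)$ for $x=(x^1,\dots,x^N)\in\mathbb R^{Nd}$. When $Z^i=0$, the term $(r^i)^{-1}Z^i\cdot(b^i(X)-b^i(Y))f'(r^i)$ is taken to be $0$. Drift assumption: there is $\kappa:(0,\infty)\to\mathbb R$ with $\kappa(r)\le\inf\{-\frac{2}{\sigma^2}\frac{(x-y)\cdot(b(x)-b(y))}{|x-y|^2}: |x-y|=r\}$, continuous on $(0,\infty)$, bounded below on $(0,\infty)$, with $\liminf_{r\to\infty}\kappa(r)>0$. Perturbation assumption: $\sum_{i=1}^N|\gamma^i(x)-\gamma^i(y)|\le L\sum_{i=1}^N|x^i-y^i|$ for all $x,y$. Construction of $f,c_0,\varphi_0$: $\kappa(r)^-=\max\{-\kappa(r),0\}$; $R_0=\inf\{R\ge0:\kappa(r)\ge0\ \forall r\ge R\}$; $R_1=\inf\{R\ge R_0:\kappa(r)R(R-R_0)\ge16\ \forall r\ge R\}$; $\varphi(r)=\exp(-\frac14\int_0^r s\kappa(s)^-ds)$; $\Phi(r)=\int_0^r\varphi$; $I=\int_0^{R_1}\frac{\Phi(s)}{\varphi(s)}ds$; $c_0=1/I$; $\varphi_0=\exp(-\frac14\int_0^{R_0}s\kappa(s)^-ds)$; $\eta=\frac{\Phi(R_1)}{2\varphi(R_1)I}$; $g(r)=1-\frac1{2I}\int_0^r\frac{\Phi(s)}{\varphi(s)}ds$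 for $r\le R_1$, $g(r)=\frac12-\frac{\eta(r-R_1)}{1+4\eta(r-R_1)}$ for $r>R_1$; $f(r)=\int_0^r\varphi(s)g(s)\,ds$. *)

theory Defs
  imports "HOL-Analysis.Analysis"
begin

definition negpart :: "real \<Rightarrow> real" where
  "negpart x = - min x 0"

fun Ck :: "nat \<Rightarrow> ('a::euclidean_space \<Rightarrow> real) \<Rightarrow> bool" where
  "Ck 0 h = continuous_on UNIV h"
| "Ck (Suc k) h = (continuous_on UNIV h \<and>
     (\<forall>u\<in>Basis. \<exists>h'. (\<forall>x. ((\<lambda>t. h (x + t *\<^sub>R u)) has_real_derivative h' x) (at 0)) \<and> Ck k h'))"

definition smooth :: "('a::euclidean_space \<Rightarrow> real) \<Rightarrow> bool" where
  "smooth h = (\<forall>k. Ck k h)"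

text \<open>The construction of f, c_0, phi_0 from kappa (kappa only matters on (0,oo)).\<close>
definition R0 :: "(real \<Rightarrow> real) \<Rightarrow> real" where
  "R0 \<kappa> = Inf {R. R \<ge> 0 \<and> (\<forall>r. r > 0 \<and> r \<ge> R \<longrightarrow> \<kappa> r \<ge> 0)}"

definition R1 :: "(real \<Rightarrow> real) \<Rightarrow> real" where
  "R1 \<kappa> = Inf {R. R \<ge> R0 \<kappa> \<and> (\<forall>r. r > 0 \<and> r \<ge> R \<longrightarrow> \<kappa> r * R * (R - R0 \<kappa>) \<ge> 16)}"

definition phi :: "(real \<Rightarrow> real) \<Rightarrow> real \<Rightarrow> real" where
  "phi \<kappa> r = exp (- (1/4) * integral {0..r} (\<lambda>s. s * negpart (\<kappa> s)))"

definition Phi :: "(real \<Rightarrow> real) \<Rightarrow> real \<Rightarrow> real" where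
  "Phi \<kappa> r = integral {0..r} (phi \<kappa>)"

definition Iconst :: "(real \<Rightarrow> real) \<Rightarrow> real" where
  "Iconst \<kappa> = integral {0..R1 \<kappa>} (\<lambda>s. Phi \<kappa> s / phi \<kappa> s)"

definition c0 :: "(real \<Rightarrow> real) \<Rightarrow> real" where
  "c0 \<kappa> = 1 / Iconst \<kappa>"

definition phi0 :: "(real \<Rightarrow> real) \<Rightarrow> real" where
  "phi0 \<kappa> = exp (- (1/4) * integral {0..R0 \<kappa>} (\<lambda>s. s * negpart (\<kappa> s)))"

definition eta :: "(real \<Rightarrow> real) \<Rightarrow> real" where
  "eta \<kappa> = Phi \<kappa> (R1 \<kappa>) / (2 * phi \<kappa> (R1 \<kappa>) * Iconst \<kappa>)"

definition gfun :: "(real \<Rightarrow> real) \<Rightarrow> real \<Rightarrow> real" where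
  "gfun \<kappa> r = (if r \<le> R1 \<kappa>
      then 1 - (1 / (2 * Iconst \<kappa>)) * integral {0..r} (\<lambda>s. Phi \<kappa> s / phi \<kappa> s)
      else 1/2 - eta \<kappa> * (r - R1 \<kappa>) / (1 + 4 * eta \<kappa> * (r - R1 \<kappa>)))"

definition ffun :: "(real \<Rightarrow> real) \<Rightarrow> real \<Rightarrow> real" where
  "ffun \<kappa> r = integral {0..r} (\<lambda>s. phi \<kappa> s * gfun \<kappa> s)"

text \<open>f' and f'' on [0,oo) (one-sided at 0, ordinary derivatives for r > 0).\<close>
definition fd1 :: "(real \<Rightarrow> real) \<Rightarrow> real \<Rightarrow> real" where
  "fd1 \<kappa> r = vector_derivative (ffun \<kappa>) (at r within {0..})"

definition fd2 :: "(real \<Rightarrow> real) \<Rightarrow> real \<Rightarrow> real" where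
  "fd2 \<kappa> r = vector_derivative (fd1 \<kappa>) (at r within {0..})"

definition mdelta :: "(real \<Rightarrow> real) \<Rightarrow> real \<Rightarrow> real \<Rightarrow> real" where
  "mdelta \<kappa> \<sigma> \<delta> = \<sigma>\<^sup>2 / 2 * Sup ((\<lambda>r. r * negpart (\<kappa> r)) ` {0<..<\<delta>}) + c0 \<kappa> * \<sigma>\<^sup>2 * \<delta>"

end

theory Submission
  imports Defs
begin

locale K =
  fixes \<kappa> :: "real \<Rightarrow> real"
  assumes kcont: "continuous_on {0<..} \<kappa>"
    and kbdd: "\<exists>B. \<forall>r>0. \<kappa> r \<ge> B"
    and klim: "Liminf at_top (\<lambda>r. ereal (\<kappa> r)) > 0"
begin

definition h :: "real \<Rightarrow> real" where "h s = s * negpart (\<kappa> s)"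

lemma negpart_nonneg: "negpart x \<ge> 0" by (simp add: negpart_def)

lemma h_nonneg: "s \<ge> 0 \<Longrightarrow> h s \<ge> 0"
  by (simp add: h_def negpart_nonneg)

lemma Mbound: obtains M where "M \<ge> 0" "\<And>s. s > 0 \<Longrightarrow> negpart (\<kappa> s) \<le> M"
proof -
  obtain B where B: "\<forall>r>0. \<kappa> r \<ge> B" using kbdd by blast
  show ?thesis
    apply (rule that[of "max (-B) 0"])
    using B by (auto simp: negpart_def)
qed

lemma h_cont: "continuous_on {0..} h"
proof -
  obtain M where M: "M \<ge> 0" "\<And>s. s > 0 \<Longrightarrow> negpart (\<kappa> s) \<le> M" using Mbound by blast
  have "continuous (at x within {0..}) h" if x: "x \<ge> 0" for x
  proof (cases "x = 0")
    case True
    have "(h \<longlongrightarrow> 0) (at 0 within {0..})"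
    proof (rule tendsto_sandwich[where f="\<lambda>_. 0" and h="\<lambda>s. M * s"])
      show "\<forall>\<^sub>F n in at 0 within {0..}. 0 \<le> h n"
        by (auto simp: eventually_at_filter h_nonneg)
      show "\<forall>\<^sub>F n in at 0 within {0..}. h n \<le> M * n"
        unfolding eventually_at_filter
        by (auto intro!: always_eventually simp: h_def M(2) mult.commute mult_left_mono)
      show "((\<lambda>s. M * s) \<longlongrightarrow> 0) (at 0 within {0..})"
        by (auto intro!: tendsto_eq_intros)
    qed simp
    then show ?thesis using True by (simp add: continuous_within h_def)
  next
    case False
    then have xp: "x > 0" using x by simp
    have "isCont \<kappa> x" using kcont xp
      by (simp add: continuous_on_eq_continuous_at)
    then have "isCont h x"
      unfolding h_def negpart_def by (intro continuous_intros) auto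
    then show ?thesis by (simp add: continuous_at_imp_continuous_at_within)
  qed
  then show ?thesis by (simp add: continuous_on_eq_continuous_within)
qed

lemma integral_deriv0:
  fixes u :: "real \<Rightarrow> real"
  assumes "continuous_on {0..} u" "r \<ge> 0"
  shows "((\<lambda>x. integral {0..x} u) has_real_derivative u r) (at r within {0..})"
proof -
  have "((\<lambda>x. integral {0..x} u) has_real_derivative u r) (at r within {0..r+1})"
    by (rule integral_has_real_derivative) (auto intro: continuous_on_subset[OF assms(1)] simp: assms)
  moreover have "at r within {0..r+1} = at r within {0..}"
    by (rule at_within_nhd[where S="{..<r+1}"]) auto
  ultimately show ?thesis by simp
qed

lemma eps: "\<exists>z M. z > 0 \<and> (\<forall>r\<ge>M. \<kappa> r > z)"
proof -
  obtain z where z: "0 < ereal z" "ereal z < Liminf at_top (\<lambda>r. ereal (\<kappa> r))"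
    using ereal_dense2[OF klim] by blast
  have "eventually (\<lambda>r. ereal z < ereal (\<kappa> r)) at_top"
    by (rule less_LiminfD[OF z(2)])
  then obtain M where "\<forall>r\<ge>M. ereal z < ereal (\<kappa> r)"
    by (auto simp: eventually_at_top_linorder)
  then show ?thesis using z(1) by auto
qed

definition SR0 where "SR0 = {R. R \<ge> 0 \<and> (\<forall>r. r > 0 \<and> r \<ge> R \<longrightarrow> \<kappa> r \<ge> 0)}"
definition SR1 where "SR1 = {R. R \<ge> R0 \<kappa> \<and> (\<forall>r. r > 0 \<and> r \<ge> R \<longrightarrow> \<kappa> r * R * (R - R0 \<kappa>) \<ge> 16)}"

lemma SR0_ne: "SR0 \<noteq> {}"
proof -
  obtain z M where zM: "z > 0" "\<forall>r\<ge>M. \<kappa> r > z" using eps by blast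
  then have "max M 0 \<in> SR0" unfolding SR0_def by (auto intro: less_imp_le)
  then show ?thesis by blast
qed

lemma R0_nonneg: "R0 \<kappa> \<ge> 0"
  unfolding R0_def SR0_def[symmetric] using SR0_ne
  by (intro cInf_greatest) (auto simp: SR0_def)

lemma R0_ge: assumes "r > R0 \<kappa>" shows "\<kappa> r \<ge> 0"
proof -
  have "bdd_below SR0" unfolding SR0_def bdd_below_def by auto
  from cInf_lessD[OF SR0_ne, of r] assms obtain R where "R \<in> SR0" "R < r"
    unfolding R0_def SR0_def[symmetric] by blast
  then show ?thesis using R0_nonneg assms unfolding SR0_def by auto
qed

lemma h_zero: assumes "s \<ge> R0 \<kappa>" shows "h s = 0"
proof (cases "s > R0 \<kappa>")
  case True then show ?thesis using R0_ge by (simp add: h_def negpart_def)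
next
  case False
  then have s: "s = R0 \<kappa>" using assms by simp
  show ?thesis
  proof (cases "s = 0")
    case True then show ?thesis by (simp add: h_def)
  next
    case False
    then have sp: "s > 0" using s R0_nonneg by simp
    have "isCont \<kappa> s" using kcont sp
      by (simp add: continuous_on_eq_continuous_at)
    then have "(\<kappa> \<longlongrightarrow> \<kappa> s) (at_right s)"
      by (simp add: isCont_def filterlim_at_split)
    moreover have "eventually (\<lambda>r. \<kappa> r \<ge> 0) (at_right s)"
      using R0_ge s by (auto simp: eventually_at_filter)
    ultimately have "\<kappa> s \<ge> 0"
      by (intro tendsto_lowerbound) auto
    then show ?thesis by (simp add: h_def negpart_def)
  qed
qed

lemma SR1_ne: "SR1 \<noteq> {}"
proof -
  obtain z M where zM: "z > 0" "\<forall>r\<ge>M. \<kappa> r > z" using eps by blast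
  define R where "R = R0 \<kappa> + max M 0 + 1 + 16 / z"
  have R1: "R - R0 \<kappa> \<ge> 1" "R - R0 \<kappa> \<ge> 16 / z" "R \<ge> M" "R \<ge> 1"
  proof -
    have "16 / z > 0" using zM(1) by simp
    then show "R - R0 \<kappa> \<ge> 1" "R - R0 \<kappa> \<ge> 16 / z" "R \<ge> M" "R \<ge> 1"
      using R0_nonneg unfolding R_def by linarith+
  qed
  have "R \<in> SR1" unfolding SR1_def
  proof (safe)
    show "R0 \<kappa> \<le> R" using R1 by simp
    fix r assume r: "r > 0" "r \<ge> R"
    have kz: "\<kappa> r > z" using zM r R1 by auto
    have "R * (R - R0 \<kappa>) \<ge> 1 * (16 / z)"
      using R1 zM(1) by (intro mult_mono) auto
    then have "\<kappa> r * (R * (R - R0 \<kappa>)) \<ge> z * (16 / z)"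
      using kz zM(1) by (intro mult_mono) auto
    then show "16 \<le> \<kappa> r * R * (R - R0 \<kappa>)" using zM(1) by (simp add: mult.assoc)
  qed
  then show ?thesis by blast
qed

lemma SR1_gt: assumes "R \<in> SR1" shows "R > R0 \<kappa>"
proof -
  have "R \<ge> R0 \<kappa>" using assms by (simp add: SR1_def)
  moreover have "\<kappa> (R+1) * R * (R - R0 \<kappa>) \<ge> 16"
    using assms R0_nonneg calculation by (auto simp: SR1_def)
  ultimately show ?thesis by (cases "R = R0 \<kappa>") auto
qed

lemma SR1_up: assumes "R \<in> SR1" "R' \<ge> R" shows "R' \<in> SR1"
  unfolding SR1_def
proof safe
  have g: "R > R0 \<kappa>" using SR1_gt assms(1) .
  then show "R0 \<kappa> \<le> R'" using assms by simp
  fix r assume r: "r > 0" "r \<ge> R'"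
  have k0: "\<kappa> r \<ge> 0" using R0_ge g r assms by simp
  have "16 \<le> \<kappa> r * R * (R - R0 \<kappa>)" using assms(1) r assms(2) by (auto simp: SR1_def)
  also have "\<dots> = \<kappa> r * (R * (R - R0 \<kappa>))" by (simp add: mult.assoc)
  also have "\<dots> \<le> \<kappa> r * (R' * (R' - R0 \<kappa>))"
    using k0 g assms(2) R0_nonneg by (intro mult_left_mono mult_mono) auto
  finally show "16 \<le> \<kappa> r * R' * (R' - R0 \<kappa>)" by (simp add: mult.assoc)
qed

lemma R1_ge: "R1 \<kappa> \<ge> R0 \<kappa>"
  unfolding R1_def SR1_def[symmetric] using SR1_ne
  by (intro cInf_greatest) (auto simp: SR1_def)

lemma R1_key: assumes "r > R1 \<kappa>" shows "\<kappa> r * R1 \<kappa> * (R1 \<kappa> - R0 \<kappa>) \<ge> 16"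
proof -
  have inS: "R \<in> SR1" if "R > R1 \<kappa>" for R
  proof -
    from cInf_lessD[OF SR1_ne, of R] that obtain R' where "R' \<in> SR1" "R' < R"
      unfolding R1_def SR1_def[symmetric] by blast
    then show ?thesis using SR1_up by auto
  qed
  have ev: "eventually (\<lambda>R. \<kappa> r * R * (R - R0 \<kappa>) \<ge> 16) (at_right (R1 \<kappa>))"
    unfolding eventually_at_right_field
  proof (intro exI[of _ r] conjI allI impI)
    show "R1 \<kappa> < r" using assms .
    fix y assume y: "R1 \<kappa> < y" "y < r"
    then have "y \<in> SR1" using inS by auto
    then show "16 \<le> \<kappa> r * y * (y - R0 \<kappa>)"
      using y R1_ge R0_nonneg unfolding SR1_def by auto
  qed
  have "((\<lambda>R. \<kappa> r * R * (R - R0 \<kappa>)) \<longlongrightarrow> \<kappa> r * R1 \<kappa> * (R1 \<kappa> - R0 \<kappa>)) (at_right (R1 \<kappa>))"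
    by (intro tendsto_eq_intros) auto
  then show ?thesis using ev by (intro tendsto_lowerbound) auto
qed

lemma R1_gt: "R1 \<kappa> > R0 \<kappa>"
proof -
  have "\<kappa> (R1 \<kappa> + 1) * R1 \<kappa> * (R1 \<kappa> - R0 \<kappa>) \<ge> 16" by (rule R1_key) simp
  then show ?thesis using R1_ge by (cases "R1 \<kappa> = R0 \<kappa>") auto
qed

lemma R1_kappa: assumes "r > R1 \<kappa>" shows "\<kappa> r \<ge> 16 / (R1 \<kappa> * (R1 \<kappa> - R0 \<kappa>))"
proof -
  have p: "R1 \<kappa> * (R1 \<kappa> - R0 \<kappa>) > 0" using R1_gt R0_nonneg by auto
  show ?thesis using R1_key[OF assms] p by (simp add: divide_le_eq mult.assoc)
qed

end

context K begin
lemma h_eq: "(\<lambda>s. s * negpart (\<kappa> s)) = h" by (simp add: h_def fun_eq_iff)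

lemma int0: "continuous_on {0..} u \<Longrightarrow> 0 \<le> a \<Longrightarrow> (u::real\<Rightarrow>real) integrable_on {a..b}"
  by (rule integrable_continuous_interval) (auto intro: continuous_on_subset)

lemma not_bot: "r \<ge> 0 \<Longrightarrow> at r within {0..} \<noteq> (bot :: real filter)"
proof -
  assume r: "r \<ge> 0"
  have "at r within {0..r+1} = at r within {0..}"
    by (rule at_within_nhd[where S="{..<r+1}"]) auto
  moreover have "r islimpt {0..r+1}" using r by simp
  ultimately show ?thesis using trivial_limit_within[of r "{0..r+1}"] by simp
qed

lemma int_combine0: "continuous_on {0..} u \<Longrightarrow> 0 \<le> a \<Longrightarrow> a \<le> b \<Longrightarrow>
   integral {0..b} (u::real\<Rightarrow>real) = integral {0..a} u + integral {a..b} u"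
  using Henstock_Kurzweil_Integration.integral_combine[where a=0 and c=a and b=b and f=u] int0[of u 0 b] by simp

lemma int_mono0: assumes "continuous_on {0..} u" "0 \<le> a" "a \<le> b" "\<And>x. x \<ge> 0 \<Longrightarrow> u x \<ge> 0"
  shows "integral {0..a} (u::real\<Rightarrow>real) \<le> integral {0..b} u"
proof -
  have "integral {a..b} u \<ge> 0" using assms by (intro integral_nonneg int0) auto
  then show ?thesis using int_combine0[OF assms(1-3)] by simp
qed

lemma int_nonneg0: assumes "continuous_on {0..} u" "0 \<le> a" "\<And>x. x \<ge> 0 \<Longrightarrow> u x \<ge> 0"
  shows "integral {0..a} (u::real\<Rightarrow>real) \<ge> 0"
  using assms by (intro integral_nonneg int0) auto

definition H where "H r = integral {0..r} h"

lemma phi_H: "phi \<kappa> r = exp (-(1/4) * H r)"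
  by (simp add: phi_def H_def h_eq)

lemma phi0_H: "phi0 \<kappa> = exp (-(1/4) * H (R0 \<kappa>))"
  by (simp add: phi0_def H_def h_eq)

lemma H_nonneg: "r \<ge> 0 \<Longrightarrow> H r \<ge> 0"
  unfolding H_def by (rule int_nonneg0[OF h_cont]) (auto simp: h_nonneg)

lemma H_le: "r \<ge> 0 \<Longrightarrow> H r \<le> H (R0 \<kappa>)"
proof (cases "r \<le> R0 \<kappa>")
  case True
  assume "r \<ge> 0" then show ?thesis unfolding H_def using True
    by (intro int_mono0[OF h_cont]) (auto simp: h_nonneg)
next
  case False
  then have "integral {R0 \<kappa>..r} h = integral {R0 \<kappa>..r} (\<lambda>_. 0)"
    by (intro integral_cong) (auto simp: h_zero)
  then show ?thesis unfolding H_def using int_combine0[OF h_cont R0_nonneg, of r] False by simp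
qed

lemma H_R0: "r \<ge> R0 \<kappa> \<Longrightarrow> H r = H (R0 \<kappa>)"
proof -
  assume r: "r \<ge> R0 \<kappa>"
  then have "integral {R0 \<kappa>..r} h = integral {R0 \<kappa>..r} (\<lambda>_. 0)"
    by (intro integral_cong) (auto simp: h_zero)
  then show ?thesis unfolding H_def using int_combine0[OF h_cont R0_nonneg r] by simp
qed

lemma H_deriv: "r \<ge> 0 \<Longrightarrow> (H has_real_derivative h r) (at r within {0..})"
  unfolding H_def[abs_def] by (rule integral_deriv0[OF h_cont])

lemma phi_pos: "phi \<kappa> r > 0" by (simp add: phi_H)
lemma phi0_pos: "phi0 \<kappa> > 0" by (simp add: phi0_H)
lemma phi_le1: "r \<ge> 0 \<Longrightarrow> phi \<kappa> r \<le> 1"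
proof -
  assume "r \<ge> 0"
  then have "H r \<ge> 0" by (rule H_nonneg)
  then show ?thesis by (simp add: phi_H)
qed
lemma phi_ge: "r \<ge> 0 \<Longrightarrow> phi \<kappa> r \<ge> phi0 \<kappa>"
proof -
  assume "r \<ge> 0"
  then have "H r \<le> H (R0 \<kappa>)" by (rule H_le)
  then show ?thesis by (simp add: phi_H phi0_H)
qed
lemma phi_R0: "r \<ge> R0 \<kappa> \<Longrightarrow> phi \<kappa> r = phi0 \<kappa>"
proof -
  assume "r \<ge> R0 \<kappa>"
  then have "H r = H (R0 \<kappa>)" by (rule H_R0)
  then show ?thesis by (simp add: phi_H phi0_H)
qed

lemma phi_deriv: "r \<ge> 0 \<Longrightarrow> (phi \<kappa> has_real_derivative (-(1/4) * h r * phi \<kappa> r)) (at r within {0..})"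
proof -
  assume r: "r \<ge> 0"
  have "((\<lambda>x. exp (-(1/4) * H x)) has_real_derivative exp (-(1/4) * H r) * (-(1/4) * h r)) (at r within {0..})"
    by (intro DERIV_chain2[OF DERIV_exp] DERIV_cmult H_deriv r)
  then show ?thesis unfolding phi_H[abs_def] by (simp add: phi_H mult_ac)
qed

lemma phi_cont: "continuous_on {0..} (phi \<kappa>)"
  by (rule DERIV_continuous_on[OF phi_deriv]) auto

lemma Phi_deriv: "r \<ge> 0 \<Longrightarrow> (Phi \<kappa> has_real_derivative phi \<kappa> r) (at r within {0..})"
  unfolding Phi_def[abs_def] by (rule integral_deriv0[OF phi_cont])

lemma Phi_cont: "continuous_on {0..} (Phi \<kappa>)"
  by (rule DERIV_continuous_on[OF Phi_deriv]) auto

lemma Phi_nonneg: "r \<ge> 0 \<Longrightarrow> Phi \<kappa> r \<ge> 0"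
  unfolding Phi_def by (rule int_nonneg0[OF phi_cont]) (auto simp: less_imp_le[OF phi_pos])

lemma Phi_le: "r \<ge> 0 \<Longrightarrow> Phi \<kappa> r \<le> r"
proof -
  assume r: "r \<ge> 0"
  have "Phi \<kappa> r \<le> integral {0..r} (\<lambda>_. 1::real)"
    unfolding Phi_def using r by (intro integral_le int0[OF phi_cont]) (auto simp: phi_le1)
  then show ?thesis using r by simp
qed

lemma Phi_ge: "r \<ge> 0 \<Longrightarrow> Phi \<kappa> r \<ge> r * phi0 \<kappa>"
proof -
  assume r: "r \<ge> 0"
  have "Phi \<kappa> r \<ge> integral {0..r} (\<lambda>_. phi0 \<kappa>)"
    unfolding Phi_def using r by (intro integral_le int0[OF phi_cont]) (auto simp: phi_ge)
  then show ?thesis using r by simp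
qed

lemma Phi_R0: "r \<ge> R0 \<kappa> \<Longrightarrow> Phi \<kappa> r = Phi \<kappa> (R0 \<kappa>) + phi0 \<kappa> * (r - R0 \<kappa>)"
proof -
  assume r: "r \<ge> R0 \<kappa>"
  have "integral {R0 \<kappa>..r} (phi \<kappa>) = integral {R0 \<kappa>..r} (\<lambda>_. phi0 \<kappa>)"
    by (intro integral_cong) (auto simp: phi_R0)
  then show ?thesis unfolding Phi_def using int_combine0[OF phi_cont R0_nonneg r] r
    by (simp add: mult.commute)
qed

end

context K begin

definition q where "q s = Phi \<kappa> s / phi \<kappa> s"
lemma q_eq: "(\<lambda>s. Phi \<kappa> s / phi \<kappa> s) = q" by (simp add: q_def fun_eq_iff)

lemma q_cont: "continuous_on {0..} q"
  unfolding q_def[abs_def]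
  by (intro continuous_on_divide Phi_cont phi_cont) (auto simp: phi_pos[THEN less_imp_neq, symmetric])

lemma q_nonneg: "s \<ge> 0 \<Longrightarrow> q s \<ge> 0"
  unfolding q_def using Phi_nonneg phi_pos by (simp add: less_imp_le)

definition J where "J r = integral {0..r} q"

lemma J_deriv: "r \<ge> 0 \<Longrightarrow> (J has_real_derivative q r) (at r within {0..})"
  unfolding J_def[abs_def] by (rule integral_deriv0[OF q_cont])

lemma I_J: "Iconst \<kappa> = J (R1 \<kappa>)" by (simp add: Iconst_def J_def q_eq)

lemma J_nonneg: "r \<ge> 0 \<Longrightarrow> J r \<ge> 0"
  unfolding J_def by (rule int_nonneg0[OF q_cont]) (auto simp: q_nonneg)

lemma J_mono: "0 \<le> a \<Longrightarrow> a \<le> b \<Longrightarrow> J a \<le> J b"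
  unfolding J_def by (rule int_mono0[OF q_cont]) (auto simp: q_nonneg)

abbreviation "P \<equiv> Phi \<kappa> (R0 \<kappa>) / phi0 \<kappa>"
abbreviation "D \<equiv> R1 \<kappa> - R0 \<kappa>"

lemma P_ge: "P \<ge> R0 \<kappa>"
  using Phi_ge[OF R0_nonneg] phi0_pos by (simp add: le_divide_eq)

lemma q_R0: "s \<ge> R0 \<kappa> \<Longrightarrow> q s = P + (s - R0 \<kappa>)"
proof -
  assume s: "s \<ge> R0 \<kappa>"
  have "phi \<kappa> s = phi0 \<kappa>" using s by (rule phi_R0)
  moreover have "Phi \<kappa> s = Phi \<kappa> (R0 \<kappa>) + phi0 \<kappa> * (s - R0 \<kappa>)" using s by (rule Phi_R0)
  ultimately show ?thesis using phi0_pos by (simp add: q_def field_simps)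
qed

lemma I_lower: "Iconst \<kappa> \<ge> D * P + D^2 / 2"
proof -
  let ?F = "\<lambda>s. P * s + (s - R0 \<kappa>)^2 / 2"
  have "((\<lambda>s. P + (s - R0 \<kappa>)) has_integral (?F (R1 \<kappa>) - ?F (R0 \<kappa>))) {R0 \<kappa>..R1 \<kappa>}"
  proof (rule fundamental_theorem_of_calculus)
    show "R0 \<kappa> \<le> R1 \<kappa>" using R1_ge .
    fix x :: real
    have "(?F has_real_derivative (P + (x - R0 \<kappa>))) (at x within {R0 \<kappa>..R1 \<kappa>})"
      using phi0_pos by (auto intro!: derivative_eq_intros simp: field_simps)
    then show "(?F has_vector_derivative (P + (x - R0 \<kappa>))) (at x within {R0 \<kappa>..R1 \<kappa>})"
      by (simp add: has_real_derivative_iff_has_vector_derivative)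
  qed
  then have "integral {R0 \<kappa>..R1 \<kappa>} (\<lambda>s. P + (s - R0 \<kappa>)) = ?F (R1 \<kappa>) - ?F (R0 \<kappa>)"
    by (rule integral_unique)
  moreover have "\<And>p a c::real. p*a + (a-c)^2/2 - (p*c + (c-c)^2/2) = (a-c)*p + (a-c)^2/2"
    by (simp add: algebra_simps)
  ultimately have i1: "integral {R0 \<kappa>..R1 \<kappa>} (\<lambda>s. P + (s - R0 \<kappa>)) = D * P + D^2/2"
    by metis
  have "integral {R0 \<kappa>..R1 \<kappa>} q = integral {R0 \<kappa>..R1 \<kappa>} (\<lambda>s. P + (s - R0 \<kappa>))"
    by (intro integral_cong) (auto simp: q_R0)
  moreover have "J (R1 \<kappa>) = J (R0 \<kappa>) + integral {R0 \<kappa>..R1 \<kappa>} q"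
    unfolding J_def by (rule int_combine0[OF q_cont R0_nonneg R1_ge])
  ultimately show ?thesis using i1 J_nonneg[OF R0_nonneg] I_J by simp
qed

lemma I_pos: "Iconst \<kappa> > 0"
proof -
  have "D > 0" using R1_gt by simp
  moreover have "P \<ge> 0" using P_ge R0_nonneg by simp
  ultimately have "D * P \<ge> 0" "D^2/2 > 0" using mult_nonneg_nonneg[of D P] by auto
  then have "D * P + D^2/2 > 0" by linarith
  then show ?thesis using I_lower by simp
qed

lemma c0_pos: "c0 \<kappa> > 0" using I_pos by (simp add: c0_def)

lemma eta_nonneg: "eta \<kappa> \<ge> 0"
  unfolding eta_def using Phi_nonneg[of "R1 \<kappa>"] R1_ge R0_nonneg phi_pos[of "R1 \<kappa>"] I_pos
  by simp

definition g1 where "g1 x = 1 - (1 / (2 * Iconst \<kappa>)) * J x"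
definition g2 where "g2 x = 1/2 - eta \<kappa> * (x - R1 \<kappa>) / (1 + 4 * eta \<kappa> * (x - R1 \<kappa>))"
definition gd where "gd r = (if r \<le> R1 \<kappa> then - (1 / (2 * Iconst \<kappa>)) * q r
                       else - eta \<kappa> / (1 + 4 * eta \<kappa> * (r - R1 \<kappa>))^2)"

lemma gfun_eq: "gfun \<kappa> r = (if r \<le> R1 \<kappa> then g1 r else g2 r)"
  by (simp add: gfun_def g1_def g2_def J_def q_eq)

lemma g1_R1: "g1 (R1 \<kappa>) = 1/2" using I_pos by (simp add: g1_def I_J[symmetric])
lemma g2_R1: "g2 (R1 \<kappa>) = 1/2" by (simp add: g2_def)

lemma den_pos: "x \<ge> R1 \<kappa> \<Longrightarrow> 1 + 4 * eta \<kappa> * (x - R1 \<kappa>) > 0"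
  using eta_nonneg by (simp add: add_pos_nonneg)

lemma g1_deriv: "r \<ge> 0 \<Longrightarrow> (g1 has_real_derivative - (1 / (2 * Iconst \<kappa>)) * q r) (at r within {0..})"
  unfolding g1_def[abs_def] using I_pos by (auto intro!: derivative_eq_intros J_deriv)

lemma g2_deriv: assumes "r \<ge> R1 \<kappa>"
  shows "(g2 has_real_derivative - eta \<kappa> / (1 + 4 * eta \<kappa> * (r - R1 \<kappa>))^2) (at r)"
proof -
  have d: "1 + 4 * eta \<kappa> * (r - R1 \<kappa>) \<noteq> 0" using den_pos[OF assms] by simp
  let ?e = "eta \<kappa>" and ?R = "R1 \<kappa>"
  have d1: "((\<lambda>x. ?e * (x - ?R)) has_real_derivative ?e) (at r)"
    by (auto intro!: derivative_eq_intros)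
  have d2: "((\<lambda>x. 1 + 4 * ?e * (x - ?R)) has_real_derivative 4 * ?e) (at r)"
    by (auto intro!: derivative_eq_intros)
  have "((\<lambda>x. ?e * (x - ?R) / (1 + 4 * ?e * (x - ?R))) has_real_derivative
     (?e * (1 + 4 * ?e * (r - ?R)) - ?e * (r - ?R) * (4 * ?e)) / ((1 + 4 * ?e * (r - ?R)) * (1 + 4 * ?e * (r - ?R)))) (at r)"
    by (rule DERIV_divide[OF d1 d2 d])
  then have "((\<lambda>x. 1/2 - ?e * (x - ?R) / (1 + 4 * ?e * (x - ?R))) has_real_derivative
     0 - (?e * (1 + 4 * ?e * (r - ?R)) - ?e * (r - ?R) * (4 * ?e)) / ((1 + 4 * ?e * (r - ?R)) * (1 + 4 * ?e * (r - ?R)))) (at r)"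
    by (intro DERIV_diff DERIV_const)
  moreover have "0 - (?e * (1 + 4 * ?e * (r - ?R)) - ?e * (r - ?R) * (4 * ?e)) / ((1 + 4 * ?e * (r - ?R)) * (1 + 4 * ?e * (r - ?R)))
     = - ?e / (1 + 4 * ?e * (r - ?R))^2"
    by (simp add: power2_eq_square algebra_simps)
  ultimately show ?thesis unfolding g2_def[abs_def] by simp
qed

lemma deriv_Un: "(f has_real_derivative E) (at x within S) \<Longrightarrow> (f has_real_derivative E) (at x within T)
   \<Longrightarrow> (f has_real_derivative E) (at x within (S \<union> T))"
  by (simp add: has_field_derivative_iff Lim_within_Un)

lemma g_deriv: assumes r: "r \<ge> 0" shows "(gfun \<kappa> has_real_derivative gd r) (at r within {0..})"
proof -
  consider "r < R1 \<kappa>" | "r > R1 \<kappa>" | "r = R1 \<kappa>" by linarith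
  then show ?thesis
  proof cases
    case 1
    have "(g1 has_real_derivative gd r) (at r within {0..})"
      using g1_deriv[OF r] 1 by (simp add: gd_def)
    then show ?thesis
      apply (rule has_field_derivative_transform_within[where d="R1 \<kappa> - r"])
      using 1 r by (auto simp: gd_def gfun_eq dist_real_def)
  next
    case 2
    have "(g2 has_real_derivative gd r) (at r within {0..})"
      using g2_deriv[of r] 2 by (auto simp: gd_def intro: has_field_derivative_at_within)
    then show ?thesis
      apply (rule has_field_derivative_transform_within[where d="r - R1 \<kappa>"])
      using 2 r by (auto simp: gfun_eq dist_real_def)
  next
    case 3
    have e: "(1 / (2 * Iconst \<kappa>)) * q (R1 \<kappa>) = eta \<kappa>"
      using I_pos phi_pos[of "R1 \<kappa>"] by (simp add: eta_def q_def field_simps)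
    have a: "(gfun \<kappa> has_real_derivative gd r) (at r within {0..R1 \<kappa>})"
    proof -
      have "(g1 has_real_derivative gd r) (at r within {0..R1 \<kappa>})"
        using g1_deriv[OF r] 3 by (auto simp: gd_def intro: has_field_derivative_subset)
      then show ?thesis
        apply (rule has_field_derivative_transform_within[where d=1])
        using 3 r by (auto simp: gfun_eq)
    qed
    have b: "(gfun \<kappa> has_real_derivative gd r) (at r within {R1 \<kappa>..})"
    proof -
      have "(g2 has_real_derivative gd r) (at r within {R1 \<kappa>..})"
        using g2_deriv[of r] 3 e by (auto simp: gd_def intro: has_field_derivative_at_within)
      then show ?thesis
        apply (rule has_field_derivative_transform_within[where d=1])
        using 3 r g1_R1 g2_R1 by (auto simp: gfun_eq)
    qed
    have "{0..R1 \<kappa>} \<union> {R1 \<kappa>..} = {0::real..}" using R1_ge R0_nonneg by auto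
    then show ?thesis using deriv_Un[OF a b] by simp
  qed
qed

lemma g_cont: "continuous_on {0..} (gfun \<kappa>)"
  by (rule DERIV_continuous_on[OF g_deriv]) auto

lemma g_bounds: assumes "r \<ge> 0" shows "gfun \<kappa> r \<ge> 1/4" "gfun \<kappa> r \<le> 1"
proof -
  have "1/4 \<le> gfun \<kappa> r \<and> gfun \<kappa> r \<le> 1"
  proof (cases "r \<le> R1 \<kappa>")
    case True
    have "0 \<le> J r" "J r \<le> Iconst \<kappa>" using J_nonneg[OF assms] J_mono[OF assms True] I_J by auto
    then show ?thesis using True I_pos by (simp add: gfun_eq g1_def field_simps)
  next
    case False
    let ?s = "eta \<kappa> * (r - R1 \<kappa>)"
    have s0: "?s \<ge> 0" using False eta_nonneg by simp
    have "?s / (1 + 4 * ?s) \<le> 1/4" using s0 by (simp add: field_simps)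
    moreover have "?s / (1 + 4 * ?s) \<ge> 0" using s0 by simp
    ultimately show ?thesis using False by (simp add: gfun_eq g2_def mult.assoc)
  qed
  then show "gfun \<kappa> r \<ge> 1/4" "gfun \<kappa> r \<le> 1" by auto
qed

lemma gd_nonpos: "r \<ge> 0 \<Longrightarrow> gd r \<le> 0"
  using q_nonneg I_pos eta_nonneg by (simp add: gd_def)

end


lemma C_alg:
  fixes R0 R1 r P I p0 k G F :: real
  assumes "R1 > R0" "R0 \<ge> 0" "r > R1" "P \<ge> R0" "I \<ge> (R1-R0)*P + (R1-R0)^2/2"
    "p0 > 0" "k \<ge> 16 / (R1*(R1-R0))" "G \<ge> 1/4" "F \<le> p0*(P + (r-R0))"
  shows "(1/2)*k*r*(p0*G) \<ge> F / I"
proof -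
  define D where "D = R1 - R0"
  have D: "D > 0" using assms D_def by simp
  have R1p: "R1 > 0" using assms by simp
  have rp: "r > 0" using assms by simp
  have P0: "P \<ge> 0" using assms by simp
  have "(R1-R0)*P + (R1-R0)^2/2 = D*(P+D/2)" unfolding D_def by (simp add: power2_eq_square field_simps)
  then have Ipos: "I \<ge> D*(P + D/2)" using assms(5) by simp
  have "D*(P + D/2) > 0" using D P0 by (intro mult_pos_pos) auto
  then have I0: "I > 0" using Ipos by linarith
  have A1: "2*r*(P + D/2) - R1*(P + (r-R0)) = R0*P + R0*D + (P-R0)*(r-R0) + P*(r-R1)"
    unfolding D_def by (simp add: field_simps)
  have "R0*P + R0*D + (P-R0)*(r-R0) + P*(r-R1) \<ge> 0"
    using assms D P0 by (intro add_nonneg_nonneg mult_nonneg_nonneg) auto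
  then have A1': "2*r*(P + D/2) \<ge> R1*(P + (r-R0))" using A1 by simp
  have "16/(R1*(R1-R0)) > 0" using R1p assms(1) by simp
  then have "k \<ge> 0" using assms(7) by linarith
  have "k*r*(p0*G) \<ge> (16/(R1*D)) * r * (p0*(1/4))"
    using assms D R1p rp D_def \<open>k \<ge> 0\<close> by (intro mult_mono) auto
  then have L: "(1/2)*k*r*(p0*G) \<ge> 2*r*p0/(R1*D)" by (simp add: field_simps)
  have "F / I \<le> p0*(P + (r-R0)) / I" using assms(9) I0 by (simp add: divide_right_mono)
  also have "\<dots> \<le> 2*r*p0/(R1*D)"
  proof -
    have "p0*(P + (r-R0)) * (R1*D) = p0 * D * (R1*(P + (r-R0)))" by simp
    also have "\<dots> \<le> p0 * D * (2*r*(P + D/2))" using A1' assms D by (intro mult_left_mono) auto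
    also have "\<dots> = 2*r*p0 * (D*(P + D/2))" by simp
    also have "\<dots> \<le> 2*r*p0 * I" using Ipos rp assms by (intro mult_left_mono) auto
    finally show ?thesis using I0 R1p D by (simp add: field_simps)
  qed
  finally show ?thesis using L by linarith
qed

context K begin

lemma fpg_cont: "continuous_on {0..} (\<lambda>s. phi \<kappa> s * gfun \<kappa> s)"
  by (intro continuous_on_mult phi_cont g_cont)

lemma ffun_deriv: "r \<ge> 0 \<Longrightarrow> (ffun \<kappa> has_real_derivative phi \<kappa> r * gfun \<kappa> r) (at r within {0..})"
  unfolding ffun_def[abs_def] by (rule integral_deriv0[OF fpg_cont])

lemma fd1_eq: "r \<ge> 0 \<Longrightarrow> fd1 \<kappa> r = phi \<kappa> r * gfun \<kappa> r"
  unfolding fd1_def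
  by (rule vector_derivative_within[OF not_bot])
     (auto simp: has_real_derivative_iff_has_vector_derivative[symmetric] intro: ffun_deriv)

lemma fd1_deriv: assumes r: "r \<ge> 0"
  shows "(fd1 \<kappa> has_real_derivative (-(1/4) * h r * phi \<kappa> r * gfun \<kappa> r + phi \<kappa> r * gd r)) (at r within {0..})"
proof -
  have "((\<lambda>x. phi \<kappa> x * gfun \<kappa> x) has_real_derivative
     (-(1/4) * h r * phi \<kappa> r) * gfun \<kappa> r + gd r * phi \<kappa> r) (at r within {0..})"
    by (rule DERIV_mult[OF phi_deriv[OF r] g_deriv[OF r]])
  then have "((\<lambda>x. phi \<kappa> x * gfun \<kappa> x) has_real_derivative
     (-(1/4) * h r * phi \<kappa> r * gfun \<kappa> r + phi \<kappa> r * gd r)) (at r within {0..})"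
    by (simp add: mult.commute)
  then show ?thesis
    apply (rule has_field_derivative_transform_within[where d=1])
    using r by (auto simp: fd1_eq)
qed

lemma fd2_eq: "r \<ge> 0 \<Longrightarrow> fd2 \<kappa> r = -(1/4) * h r * phi \<kappa> r * gfun \<kappa> r + phi \<kappa> r * gd r"
proof -
  assume r: "r \<ge> 0"
  have "(fd1 \<kappa> has_vector_derivative (-(1/4) * h r * phi \<kappa> r * gfun \<kappa> r + phi \<kappa> r * gd r)) (at r within {0..})"
    using fd1_deriv[OF r] by (simp only: has_real_derivative_iff_has_vector_derivative)
  then show ?thesis unfolding fd2_def by (rule vector_derivative_within[OF not_bot[OF r]])
qed

lemma fd1_nonneg: "r \<ge> 0 \<Longrightarrow> fd1 \<kappa> r \<ge> 0"
proof -
  assume r: "r \<ge> 0"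
  have "phi \<kappa> r * gfun \<kappa> r \<ge> 0"
    using phi_pos[of r] g_bounds(1)[OF r] by (intro mult_nonneg_nonneg) auto
  then show ?thesis using fd1_eq r by simp
qed

lemma fd1_le1: "r \<ge> 0 \<Longrightarrow> fd1 \<kappa> r \<le> 1"
proof -
  assume r: "r \<ge> 0"
  have "gfun \<kappa> r \<ge> 0" using g_bounds(1)[OF r] by simp
  then have "phi \<kappa> r * gfun \<kappa> r \<le> 1 * 1"
    using r phi_le1 g_bounds phi_pos by (intro mult_mono) (auto simp: less_imp_le)
  then show ?thesis using fd1_eq r by simp
qed

lemma fd2_nonpos: "r \<ge> 0 \<Longrightarrow> fd2 \<kappa> r \<le> 0"
proof -
  assume r: "r \<ge> 0"
  have a: "h r * phi \<kappa> r * gfun \<kappa> r \<ge> 0"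
    using h_nonneg[OF r] phi_pos g_bounds(1)[OF r] by (simp add: less_imp_le)
  have b: "phi \<kappa> r * gd r \<le> 0"
    using phi_pos gd_nonpos[OF r] by (simp add: mult_nonneg_nonpos less_imp_le)
  show ?thesis using fd2_eq[OF r] a b by simp
qed

lemma ffun_le: "r \<ge> 0 \<Longrightarrow> ffun \<kappa> r \<le> Phi \<kappa> r"
  unfolding ffun_def Phi_def
  by (intro integral_le int0[OF fpg_cont] int0[OF phi_cont])
     (auto intro: mult_left_le[OF g_bounds(2)] less_imp_le[OF phi_pos])

lemma fpg_ge: "x \<ge> 0 \<Longrightarrow> phi0 \<kappa> / 4 \<le> phi \<kappa> x * gfun \<kappa> x"
proof -
  assume x: "x \<ge> 0"
  have "phi0 \<kappa> * (1/4) \<le> phi \<kappa> x * gfun \<kappa> x"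
    by (rule mult_mono[OF phi_ge[OF x] g_bounds(1)[OF x]]) (use phi_pos[of x] in auto)
  then show ?thesis by simp
qed

lemma ffun_ge: "r \<ge> 0 \<Longrightarrow> ffun \<kappa> r \<ge> r * (phi0 \<kappa> / 4)"
proof -
  assume r: "r \<ge> 0"
  have "integral {0..r} (\<lambda>_. phi0 \<kappa> / 4) \<le> ffun \<kappa> r"
    unfolding ffun_def
    apply (rule Henstock_Kurzweil_Integration.integral_le)
    apply (rule integrable_const_ivl)
    apply (rule int0[OF fpg_cont], simp)
    apply (rule fpg_ge, simp)
    done
  then show ?thesis using r by simp
qed

end


context K begin

definition Sd where "Sd \<delta> = Sup (h ` {0<..<\<delta>})"

lemma mdelta_eq: "mdelta \<kappa> \<sigma> \<delta> = \<sigma>\<^sup>2 * ((1/2) * Sd \<delta> + c0 \<kappa> * \<delta>)"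
  unfolding mdelta_def Sd_def h_eq by (simp add: algebra_simps)

lemma Sd_bdd: "bdd_above (h ` {0<..<\<delta>})"
proof -
  obtain M where M: "M \<ge> 0" "\<And>s. s > 0 \<Longrightarrow> negpart (\<kappa> s) \<le> M" using Mbound by blast
  have "h s \<le> \<bar>\<delta>\<bar> * M" if "s \<in> {0<..<\<delta>}" for s
  proof -
    have "h s \<le> s * M" using that M by (auto simp: h_def intro: mult_left_mono)
    also have "\<dots> \<le> \<bar>\<delta>\<bar> * M" using that M by (intro mult_right_mono) auto
    finally show ?thesis .
  qed
  then show ?thesis by (intro bdd_aboveI2) blast
qed

lemma Sd_upper: "s \<in> {0<..<\<delta>} \<Longrightarrow> h s \<le> Sd \<delta>"
  unfolding Sd_def by (rule cSup_upper) (auto intro: Sd_bdd)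

lemma Sd_nonneg: "\<delta> > 0 \<Longrightarrow> Sd \<delta> \<ge> 0"
proof -
  assume d: "\<delta> > 0"
  have "h (\<delta>/2) \<le> Sd \<delta>" using d by (intro Sd_upper) auto
  moreover have "h (\<delta>/2) \<ge> 0" using d by (intro h_nonneg) auto
  ultimately show ?thesis by simp
qed

lemma t1_bound: assumes r: "r \<ge> 0" shows "-(1/2) * \<kappa> r * r * fd1 \<kappa> r \<le> (1/2) * h r * fd1 \<kappa> r"
proof -
  have "- \<kappa> r \<le> negpart (\<kappa> r)" by (simp add: negpart_def)
  then have "(- \<kappa> r) * (r * fd1 \<kappa> r) \<le> negpart (\<kappa> r) * (r * fd1 \<kappa> r)"
    using r fd1_nonneg[OF r] by (intro mult_right_mono) auto
  then show ?thesis by (simp add: h_def algebra_simps)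
qed

lemma core:
  assumes d: "\<delta> > 0" and r: "r \<ge> 0" and l: "0 \<le> l" "l \<le> 1" and l1: "r \<ge> \<delta> \<Longrightarrow> l = 1"
  shows "-(1/2) * \<kappa> r * r * fd1 \<kappa> r + 2 * l * fd2 \<kappa> r \<le> (1/2) * Sd \<delta> + c0 \<kappa> * \<delta> - c0 \<kappa> * ffun \<kappa> r"
proof -
  have S0: "Sd \<delta> \<ge> 0" using Sd_nonneg d .
  have c0: "c0 \<kappa> > 0" by (rule c0_pos)
  have fle: "ffun \<kappa> r \<le> r" using ffun_le[OF r] Phi_le[OF r] by simp
  note t1 = t1_bound[OF r]
  consider "r < \<delta>" | "r \<ge> \<delta>" "r \<le> R1 \<kappa>" | "r > R1 \<kappa>" by linarith
  then show ?thesis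
  proof cases
    case 1
    have "h r * fd1 \<kappa> r \<le> h r * 1"
      using h_nonneg[OF r] fd1_le1[OF r] by (intro mult_left_mono) auto
    moreover have "h r \<le> Sd \<delta>"
    proof (cases "r = 0")
      case True then show ?thesis using S0 by (simp add: h_def)
    next
      case False then show ?thesis using r 1 by (intro Sd_upper) auto
    qed
    moreover have "2 * l * fd2 \<kappa> r \<le> 0"
      using l fd2_nonpos[OF r] by (simp add: mult_nonneg_nonpos)
    moreover have "c0 \<kappa> * ffun \<kappa> r \<le> c0 \<kappa> * \<delta>"
      using fle 1 c0 by (intro mult_left_mono) auto
    ultimately show ?thesis using t1 by linarith
  next
    case 2
    have l1': "l = 1" using l1 2 by simp
    have gd: "gd r = - (1 / (2 * Iconst \<kappa>)) * q r" using 2 by (simp add: gd_def)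
    have pq: "phi \<kappa> r * q r = Phi \<kappa> r" using phi_pos[of r] by (simp add: q_def)
    have "2 * fd2 \<kappa> r = -(1/2) * h r * fd1 \<kappa> r - Phi \<kappa> r / Iconst \<kappa>"
      using I_pos by (simp add: fd2_eq[OF r] fd1_eq[OF r] gd pq[symmetric] field_simps)
    moreover have "Phi \<kappa> r / Iconst \<kappa> = c0 \<kappa> * Phi \<kappa> r" by (simp add: c0_def)
    moreover have "c0 \<kappa> * ffun \<kappa> r \<le> c0 \<kappa> * Phi \<kappa> r"
      using ffun_le[OF r] c0 by (intro mult_left_mono) auto
    moreover have "c0 \<kappa> * \<delta> \<ge> 0" using c0 d by simp
    moreover have "2 * l * fd2 \<kappa> r = 2 * fd2 \<kappa> r" using l1' by simp
    ultimately show ?thesis using t1 S0 by linarith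
  next
    case 3
    have rR0: "r \<ge> R0 \<kappa>" using 3 R1_ge by simp
    have "(1/2) * \<kappa> r * r * (phi0 \<kappa> * gfun \<kappa> r) \<ge> ffun \<kappa> r / Iconst \<kappa>"
    proof (rule C_alg[of "R0 \<kappa>" "R1 \<kappa>" r P])
      show "R0 \<kappa> < R1 \<kappa>" by (rule R1_gt)
      show "0 \<le> R0 \<kappa>" by (rule R0_nonneg)
      show "R1 \<kappa> < r" by (rule 3)
      show "R0 \<kappa> \<le> P" by (rule P_ge)
      show "(R1 \<kappa> - R0 \<kappa>) * P + (R1 \<kappa> - R0 \<kappa>)\<^sup>2 / 2 \<le> Iconst \<kappa>" using I_lower by (simp add: mult.commute)
      show "0 < phi0 \<kappa>" by (rule phi0_pos)
      show "16 / (R1 \<kappa> * (R1 \<kappa> - R0 \<kappa>)) \<le> \<kappa> r" using R1_kappa[OF 3] .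
      show "1/4 \<le> gfun \<kappa> r" using g_bounds(1) r by simp
      have "ffun \<kappa> r \<le> Phi \<kappa> r" by (rule ffun_le[OF r])
      also have "\<dots> = Phi \<kappa> (R0 \<kappa>) + phi0 \<kappa> * (r - R0 \<kappa>)" by (rule Phi_R0[OF rR0])
      also have "\<dots> = phi0 \<kappa> * (P + (r - R0 \<kappa>))" using phi0_pos by (simp add: field_simps)
      finally show "ffun \<kappa> r \<le> phi0 \<kappa> * (P + (r - R0 \<kappa>))" .
    qed
    moreover have "-(1/2) * \<kappa> r * r * fd1 \<kappa> r = - ((1/2) * \<kappa> r * r * (phi0 \<kappa> * gfun \<kappa> r))"
      using fd1_eq[OF r] phi_R0[OF rR0] by simp
    moreover have "ffun \<kappa> r / Iconst \<kappa> = c0 \<kappa> * ffun \<kappa> r" by (simp add: c0_def)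
    moreover have "2 * l * fd2 \<kappa> r \<le> 0"
      using l fd2_nonpos[OF r] by (simp add: mult_nonneg_nonpos)
    moreover have "c0 \<kappa> * \<delta> \<ge> 0" using c0 d by simp
    ultimately show ?thesis using S0 by linarith
  qed
qed

end


theorem lemma2:
  fixes N :: nat and \<sigma> L \<delta> :: real
    and b :: "'a::euclidean_space \<Rightarrow> 'a"
    and \<gamma> :: "nat \<Rightarrow> (nat \<Rightarrow> 'a) \<Rightarrow> 'a"
    and \<kappa> :: "real \<Rightarrow> real"
    and lam :: "'a \<Rightarrow> real"
    and X Y :: "nat \<Rightarrow> 'a"
  assumes N: "N \<ge> 1" and sigma: "\<sigma> > 0"
    and kappa_drift: "\<And>x y. x \<noteq> y \<Longrightarrow>
        \<kappa> (norm (x - y)) \<le> - (2 / \<sigma>\<^sup>2) * (inner (x - y) (b x - b y)) / (norm (x - y))\<^sup>2"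
    and kappa_cont: "continuous_on {0<..} \<kappa>"
    and kappa_bdd: "\<exists>B. \<forall>r>0. \<kappa> r \<ge> B"
    and kappa_liminf: "Liminf at_top (\<lambda>r. ereal (\<kappa> r)) > 0"
    and gamma_lip: "\<And>x y. (\<Sum>i<N. norm (\<gamma> i x - \<gamma> i y)) \<le> L * (\<Sum>i<N. norm (x i - y i))"
    and delta: "\<delta> > 0"
    and lam_smooth: "smooth lam"
    and lam_bdd: "\<And>z. \<bar>lam z\<bar> \<le> 1"
    and lam_one: "\<And>z. norm z \<ge> \<delta> \<Longrightarrow> lam z = 1"
    and L_small: "L < c0 \<kappa> * phi0 \<kappa> * \<sigma>\<^sup>2 / 8"
  shows "(\<Sum>i<N.
            (if X i - Y i = 0 then 0
             else (1 / norm (X i - Y i)) *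
                  inner (X i - Y i) ((b (X i) + \<gamma> i X) - (b (Y i) + \<gamma> i Y)) *
                  fd1 \<kappa> (norm (X i - Y i)))
            + 2 * \<sigma>\<^sup>2 * (lam (X i - Y i))\<^sup>2 * fd2 \<kappa> (norm (X i - Y i)))
         \<le> real N * mdelta \<kappa> \<sigma> \<delta> - (c0 \<kappa> * \<sigma>\<^sup>2 / 2) * (\<Sum>i<N. ffun \<kappa> (norm (X i - Y i)))"
proof -
  interpret k: K \<kappa> using kappa_cont kappa_bdd kappa_liminf by unfold_locales
  define G where "G i = norm (\<gamma> i X - \<gamma> i Y)" for i
  define B where "B = (1/2) * k.Sd \<delta> + c0 \<kappa> * \<delta>"
  define F where "F i = ffun \<kappa> (norm (X i - Y i))" for i
  have s2: "\<sigma>\<^sup>2 > 0" using sigma by simp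
  have c0: "c0 \<kappa> > 0" by (rule k.c0_pos)
  have per: "(if X i - Y i = 0 then 0
             else (1 / norm (X i - Y i)) *
                  inner (X i - Y i) ((b (X i) + \<gamma> i X) - (b (Y i) + \<gamma> i Y)) *
                  fd1 \<kappa> (norm (X i - Y i)))
            + 2 * \<sigma>\<^sup>2 * (lam (X i - Y i))\<^sup>2 * fd2 \<kappa> (norm (X i - Y i))
         \<le> \<sigma>\<^sup>2 * B - \<sigma>\<^sup>2 * c0 \<kappa> * F i + G i" for i
  proof -
    define z where "z = X i - Y i"
    define r where "r = norm z"
    define l where "l = (lam z)\<^sup>2"
    have r0: "r \<ge> 0" by (simp add: r_def)
    have l0: "0 \<le> l" by (simp add: l_def)
    have l1: "l \<le> 1" unfolding l_def using lam_bdd[of z] by (simp add: abs_square_le_1)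
    have lone: "r \<ge> \<delta> \<Longrightarrow> l = 1" unfolding l_def r_def using lam_one by simp
    have core: "-(1/2) * \<kappa> r * r * fd1 \<kappa> r + 2 * l * fd2 \<kappa> r \<le> B - c0 \<kappa> * ffun \<kappa> r"
      unfolding B_def using k.core[OF delta r0 l0 l1 lone] by simp
    have G0: "G i \<ge> 0" by (simp add: G_def)
    have f1: "0 \<le> fd1 \<kappa> r" "fd1 \<kappa> r \<le> 1" using k.fd1_nonneg[OF r0] k.fd1_le1[OF r0] by auto
    have core': "\<sigma>\<^sup>2 * (-(1/2) * \<kappa> r * r * fd1 \<kappa> r + 2 * l * fd2 \<kappa> r) \<le> \<sigma>\<^sup>2 * (B - c0 \<kappa> * ffun \<kappa> r)"
      using core s2 by (intro mult_left_mono) auto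
    show ?thesis
    proof (cases "z = 0")
      case True
      then have "r = 0" by (simp add: r_def)
      then have "2 * \<sigma>\<^sup>2 * l * fd2 \<kappa> r \<le> \<sigma>\<^sup>2 * (B - c0 \<kappa> * ffun \<kappa> r)"
        using core' by (simp add: algebra_simps)
      moreover have e: "X i - Y i = 0" using True z_def by simp
      ultimately show ?thesis using G0
        by (simp add: e r_def z_def l_def F_def algebra_simps)
    next
      case False
      then have rp: "r > 0" by (simp add: r_def)
      define A where "A = - (2 / \<sigma>\<^sup>2) * inner z (b (X i) - b (Y i))"
      have kd: "\<kappa> r \<le> A / r\<^sup>2"
        unfolding A_def using kappa_drift[of "X i" "Y i"] False by (simp add: z_def r_def)
      then have "\<kappa> r * r\<^sup>2 \<le> A"
        using rp by (simp add: pos_le_divide_eq)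
      then have "(\<sigma>\<^sup>2 / 2) * (\<kappa> r * r\<^sup>2) \<le> (\<sigma>\<^sup>2 / 2) * A"
        using s2 by (intro mult_left_mono) auto
      moreover have "(\<sigma>\<^sup>2 / 2) * A = - inner z (b (X i) - b (Y i))"
        unfolding A_def using s2 by simp
      ultimately have drift: "inner z (b (X i) - b (Y i)) \<le> - (\<sigma>\<^sup>2 / 2) * \<kappa> r * r\<^sup>2"
        by simp
      have cs: "inner z (\<gamma> i X - \<gamma> i Y) \<le> r * G i"
        unfolding r_def G_def by (rule norm_cauchy_schwarz)
      have split: "inner z ((b (X i) + \<gamma> i X) - (b (Y i) + \<gamma> i Y)) = inner z (b (X i) - b (Y i)) + inner z (\<gamma> i X - \<gamma> i Y)"
        by (simp add: inner_diff_right inner_add_right)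
      have "inner z ((b (X i) + \<gamma> i X) - (b (Y i) + \<gamma> i Y)) \<le> r * (- (\<sigma>\<^sup>2 / 2) * \<kappa> r * r + G i)"
        using drift cs split by (simp add: power2_eq_square algebra_simps)
      then have "(1 / r) * inner z ((b (X i) + \<gamma> i X) - (b (Y i) + \<gamma> i Y)) \<le> - (\<sigma>\<^sup>2 / 2) * \<kappa> r * r + G i"
        using rp by (simp add: field_simps)
      then have "(1 / r) * inner z ((b (X i) + \<gamma> i X) - (b (Y i) + \<gamma> i Y)) * fd1 \<kappa> r
           \<le> (- (\<sigma>\<^sup>2 / 2) * \<kappa> r * r + G i) * fd1 \<kappa> r"
        using f1 by (intro mult_right_mono) auto
      moreover have "G i * fd1 \<kappa> r \<le> G i" using G0 f1 by (simp add: mult_left_le)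
      ultimately have "(1 / r) * inner z ((b (X i) + \<gamma> i X) - (b (Y i) + \<gamma> i Y)) * fd1 \<kappa> r
           \<le> \<sigma>\<^sup>2 * (-(1/2) * \<kappa> r * r * fd1 \<kappa> r) + G i"
        by (simp add: algebra_simps)
      then have "(1 / r) * inner z ((b (X i) + \<gamma> i X) - (b (Y i) + \<gamma> i Y)) * fd1 \<kappa> r
           + 2 * \<sigma>\<^sup>2 * l * fd2 \<kappa> r \<le> \<sigma>\<^sup>2 * (B - c0 \<kappa> * ffun \<kappa> r) + G i"
        using core' by (simp add: algebra_simps)
      then show ?thesis using False
        by (simp add: z_def[symmetric] r_def[symmetric] l_def[symmetric] F_def algebra_simps)
    qed
  qed
  have Lr: "L * norm (X i - Y i) \<le> (c0 \<kappa> * \<sigma>\<^sup>2 / 2) * F i" for i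
  proof -
    let ?r = "norm (X i - Y i)"
    have r0: "?r \<ge> 0" by simp
    have Fge: "F i \<ge> ?r * (phi0 \<kappa> / 4)" unfolding F_def by (rule k.ffun_ge[OF r0])
    have "?r * (phi0 \<kappa> / 4) \<ge> 0" using k.phi0_pos r0 by simp
    then have F0: "F i \<ge> 0" using Fge by linarith
    show ?thesis
    proof (cases "L \<le> 0")
      case True
      then have "L * ?r \<le> 0" using r0 by (simp add: mult_nonpos_nonneg)
      moreover have "(c0 \<kappa> * \<sigma>\<^sup>2 / 2) * F i \<ge> 0" using c0 s2 F0 by simp
      ultimately show ?thesis by linarith
    next
      case False
      have "L * ?r \<le> (c0 \<kappa> * phi0 \<kappa> * \<sigma>\<^sup>2 / 8) * ?r"
        using L_small r0 by (intro mult_right_mono) auto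
      also have "\<dots> = (c0 \<kappa> * \<sigma>\<^sup>2 / 2) * (?r * (phi0 \<kappa> / 4))" by simp
      also have "\<dots> \<le> (c0 \<kappa> * \<sigma>\<^sup>2 / 2) * F i"
        using Fge c0 s2 by (intro mult_left_mono) auto
      finally show ?thesis .
    qed
  qed
  let ?T = "\<lambda>i. (if X i - Y i = 0 then 0
             else (1 / norm (X i - Y i)) *
                  inner (X i - Y i) ((b (X i) + \<gamma> i X) - (b (Y i) + \<gamma> i Y)) *
                  fd1 \<kappa> (norm (X i - Y i)))
            + 2 * \<sigma>\<^sup>2 * (lam (X i - Y i))\<^sup>2 * fd2 \<kappa> (norm (X i - Y i))"
  have "(\<Sum>i<N. ?T i) \<le> (\<Sum>i<N. \<sigma>\<^sup>2 * B - \<sigma>\<^sup>2 * c0 \<kappa> * F i + G i)"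
    by (rule sum_mono) (rule per)
  also have "\<dots> = real N * (\<sigma>\<^sup>2 * B) - \<sigma>\<^sup>2 * c0 \<kappa> * (\<Sum>i<N. F i) + (\<Sum>i<N. G i)"
    by (simp add: sum.distrib sum_subtractf sum_distrib_left)
  also have "(\<Sum>i<N. G i) \<le> L * (\<Sum>i<N. norm (X i - Y i))"
    unfolding G_def by (rule gamma_lip)
  also have "L * (\<Sum>i<N. norm (X i - Y i)) = (\<Sum>i<N. L * norm (X i - Y i))"
    by (simp add: sum_distrib_left)
  also have "\<dots> \<le> (\<Sum>i<N. (c0 \<kappa> * \<sigma>\<^sup>2 / 2) * F i)"
    by (rule sum_mono) (rule Lr)
  also have "\<dots> = (c0 \<kappa> * \<sigma>\<^sup>2 / 2) * (\<Sum>i<N. F i)"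
    by (simp add: sum_distrib_left)
  finally have "(\<Sum>i<N. ?T i) \<le> real N * (\<sigma>\<^sup>2 * B) - (c0 \<kappa> * \<sigma>\<^sup>2 / 2) * (\<Sum>i<N. F i)"
    by (simp add: algebra_simps)
  moreover have "mdelta \<kappa> \<sigma> \<delta> = \<sigma>\<^sup>2 * B" unfolding B_def by (rule k.mdelta_eq)
  ultimately show ?thesis by (simp add: F_def)
qed


end
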